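(* Let $X$ be a Banach space with property $( * )$, with constant $C_0$. Then for every subset $Y\subset X$, every continuous $F:X\to\mathbb{R}$ such that $F|_Y$ is Lipschitz, and every $\varepsilon>0$, there is a $\mathcal{C}^1$-smooth function $G:X\to\mathbb{R}$ such that (i) $|F(x)-G(x)|\le\varepsilon$ for all $x\in X$; (ii) $\operatorname{Lip}(G|_Y)\le C_0\operatorname{Lip}(F|_Y)$ and $\|G'(y)\|_{X^*}\le C_0\operatorname{Lip}(F|_Y)$ for all $y\in Y$. (iii) Moreover, there is a constant $C_1\ge C_0$ depending only on $X$ such that if $F$ is Lipschitz on $X$, then $G$ can be chosen, in addition to (i) and (ii), Lipschitz on $X$ with $\operatorname{Lip}(G)\le C_1\operatorname{Lip}(F)$.
   Context: A Banach space $X$ has property $( * )$ if there is a constant $C_0$, depending only on $X$, such that for every Lipschitz function $f:X\to\mathbb{R}$ and every $\varepsilon>0$ there is a Lipschitz, $\mathcal{C}^1$-smooth function $K:X\to\mathbb{R}$ with $|f(x)-K(x)|<\varepsilon$ for all $x\in X$ and $\operatorname{Lip}(K)\le C_0\operatorname{Lip}(f)$. *)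

theory Defs
  imports "HOL-Analysis.Analysis"
begin

text \<open>Lipschitz constant of f on S: the least Lipschitz constant (0 if S has at most one point).\<close>
definition Lip :: "'a::metric_space set \<Rightarrow> ('a \<Rightarrow> real) \<Rightarrow> real" where
  "Lip S f = Inf {L. lipschitz_on L S f}"

definition C1_with_deriv :: "('a::real_normed_vector \<Rightarrow> real) \<Rightarrow> ('a \<Rightarrow> ('a \<Rightarrow>\<^sub>L real)) \<Rightarrow> bool" where
  "C1_with_deriv G D \<longleftrightarrow> (\<forall>x. (G has_derivative blinfun_apply (D x)) (at x)) \<and> continuous_on UNIV D"

definition C1_smooth :: "('a::real_normed_vector \<Rightarrow> real) \<Rightarrow> bool" where
  "C1_smooth G \<longleftrightarrow> (\<exists>D. C1_with_deriv G D)"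

definition lipschitz :: "('a::metric_space \<Rightarrow> real) \<Rightarrow> bool" where
  "lipschitz f \<longleftrightarrow> (\<exists>L. lipschitz_on L UNIV f)"

definition property_star :: "'a::banach itself \<Rightarrow> real \<Rightarrow> bool" where
  "property_star _ C0 \<longleftrightarrow>
     (\<forall>f::'a \<Rightarrow> real. lipschitz f \<longrightarrow> (\<forall>\<epsilon>>0. \<exists>K. lipschitz K \<and> C1_smooth K \<and>
        (\<forall>x. \<bar>f x - K x\<bar> < \<epsilon>) \<and> Lip UNIV K \<le> C0 * Lip UNIV f))"

end

theory Submission
  imports Defs
begin


lemma Lip_le: "lipschitz_on L S f \<Longrightarrow> Lip S f \<le> L"
  unfolding Lip_def by (rule cInf_lower) (auto intro: bdd_belowI[where m=0] lipschitz_on_nonneg)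

lemma Lip_nonneg: "lipschitz_on L S f \<Longrightarrow> 0 \<le> Lip S f"
  unfolding Lip_def by (rule cInf_greatest) (auto intro: lipschitz_on_nonneg)

lemma Lip_attained:
  assumes "lipschitz_on L S f" shows "lipschitz_on (Lip S f) S f"
proof (rule lipschitz_onI)
  show "0 \<le> Lip S f" using Lip_nonneg[OF assms] .
  fix x y assume xy: "x \<in> S" "y \<in> S"
  show "dist (f x) (f y) \<le> Lip S f * dist x y"
  proof (cases "x = y")
    case True then show ?thesis by simp
  next
    case False
    then have d: "dist x y > 0" by simp
    have "dist (f x) (f y) / dist x y \<le> Lip S f"
      unfolding Lip_def
    proof (rule cInf_greatest)
      show "{L. lipschitz_on L S f} \<noteq> {}" using assms by auto
      fix M assume "M \<in> {L. lipschitz_on L S f}"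
      then have "dist (f x) (f y) \<le> M * dist x y" using xy lipschitz_onD by blast
      then show "dist (f x) (f y) / dist x y \<le> M" using d by (simp add: divide_le_eq)
    qed
    then show ?thesis using d by (simp add: divide_le_eq)
  qed
qed

lemma Lip_mono: "lipschitz_on L S f \<Longrightarrow> T \<subseteq> S \<Longrightarrow> Lip T f \<le> Lip S f"
  by (meson Lip_attained Lip_le lipschitz_on_subset)

lemma Lip_cong: "(\<And>x. x \<in> S \<Longrightarrow> f x = g x) \<Longrightarrow> Lip S f = Lip S g"
  unfolding Lip_def by (metis lipschitz_on_cong)

lemma deriv_norm_le_lip:
  fixes f :: "'a::real_normed_vector \<Rightarrow> real"
  assumes L: "lipschitz_on L UNIV f" and d: "(f has_derivative blinfun_apply D) (at x)"
  shows "norm D \<le> L"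
proof (rule norm_blinfun_bound)
  show L0: "0 \<le> L" using lipschitz_on_nonneg[OF L] .
  fix h
  show "norm (blinfun_apply D h) \<le> L * norm h"
  proof (cases "h = 0")
    case True then show ?thesis by (simp add: blinfun.zero_right)
  next
    case False
    then have hp: "norm h > 0" by simp
    show ?thesis
    proof (rule field_le_epsilon)
      fix e :: real assume e: "e > 0"
      define e' where "e' = e / norm h"
      have e': "e' > 0" using e hp by (simp add: e'_def)
      obtain dd where dd: "dd > 0" and
        H: "\<And>y. norm (y - x) < dd \<Longrightarrow> norm (f y - f x - blinfun_apply D (y - x)) \<le> e' * norm (y - x)"
        using d e' unfolding has_derivative_at_alt by blast
      define t where "t = dd / (2 * norm h)"
      have t: "t > 0" using dd hp by (simp add: t_def)
      have "norm ((x + t *\<^sub>R h) - x) < dd" using t hp dd by (simp add: t_def)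
      then have 1: "norm (f (x + t *\<^sub>R h) - f x - t * blinfun_apply D h) \<le> e' * (t * norm h)"
        using H[of "x + t *\<^sub>R h"] t by (simp add: blinfun.scaleR_right)
      have 2: "\<bar>f (x + t *\<^sub>R h) - f x\<bar> \<le> L * (t * norm h)"
        using lipschitz_on_normD[OF L, of "x + t *\<^sub>R h" x] t by simp
      have "t * \<bar>blinfun_apply D h\<bar> \<le> t * (L * norm h + e' * norm h)"
        using 1 2 by (simp add: abs_mult algebra_simps) 
      then have "\<bar>blinfun_apply D h\<bar> \<le> L * norm h + e' * norm h" using t by simp
      then show "norm (blinfun_apply D h) \<le> L * norm h + e" using hp by (simp add: e'_def)
    qed
  qed
qed



definition C1_on :: "'a::real_normed_vector set \<Rightarrow> ('a \<Rightarrow> real) \<Rightarrow> ('a \<Rightarrow> ('a \<Rightarrow>\<^sub>L real)) \<Rightarrow> bool" where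
  "C1_on U f D \<longleftrightarrow> (\<forall>x\<in>U. (f has_derivative blinfun_apply (D x)) (at x)) \<and> continuous_on U D"

lemma C1_with_deriv_iff: "C1_with_deriv f D \<longleftrightarrow> C1_on UNIV f D"
  by (simp add: C1_with_deriv_def C1_on_def)

lemma C1_on_cont: "C1_on U f D \<Longrightarrow> continuous_on U f"
  unfolding C1_on_def
  by (meson continuous_at_imp_continuous_on has_derivative_continuous)

lemma C1_on_subset: "C1_on U f D \<Longrightarrow> V \<subseteq> U \<Longrightarrow> C1_on V f D"
  unfolding C1_on_def by (meson continuous_on_subset subsetD)

lemma C1_on_const: "C1_on U (\<lambda>x. c) (\<lambda>x. 0)"
  unfolding C1_on_def by (auto simp: zero_blinfun.rep_eq)

lemma C1_on_add: "C1_on U f Df \<Longrightarrow> C1_on U g Dg \<Longrightarrow> C1_on U (\<lambda>x. f x + g x) (\<lambda>x. Df x + Dg x)"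
  unfolding C1_on_def by (auto simp: plus_blinfun.rep_eq intro!: has_derivative_add continuous_on_add)

lemma C1_on_diff: "C1_on U f Df \<Longrightarrow> C1_on U g Dg \<Longrightarrow> C1_on U (\<lambda>x. f x - g x) (\<lambda>x. Df x - Dg x)"
  unfolding C1_on_def by (auto simp: minus_blinfun.rep_eq intro!: has_derivative_diff continuous_on_diff)

lemma C1_on_mult:
  assumes f: "C1_on U f Df" and g: "C1_on U g Dg"
  shows "C1_on U (\<lambda>x. f x * g x) (\<lambda>x. f x *\<^sub>R Dg x + g x *\<^sub>R Df x)"
proof -
  have cf: "continuous_on U f" and cg: "continuous_on U g" using C1_on_cont[OF f] C1_on_cont[OF g] by auto
  show ?thesis
    using f g unfolding C1_on_def
    apply (auto intro!: continuous_on_add continuous_on_scaleR cf cg)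
    apply (rule has_derivative_eq_rhs)
     apply (rule has_derivative_mult, blast, blast)
    by (auto simp: fun_eq_iff plus_blinfun.rep_eq scaleR_blinfun.rep_eq)
qed

lemma C1_on_sum:
  assumes "finite I" "\<And>i. i \<in> I \<Longrightarrow> C1_on U (f i) (Df i)"
  shows "C1_on U (\<lambda>x. \<Sum>i\<in>I. f i x) (\<lambda>x. \<Sum>i\<in>I. Df i x)"
  using assms
proof (induction I rule: finite_induct)
  case empty then show ?case using C1_on_const[of U 0] by simp
next
  case (insert i I)
  then show ?case using C1_on_add[of U "f i" "Df i"] by simp
qed

lemma C1_on_compose:
  fixes \<phi> \<phi>' :: "real \<Rightarrow> real"
  assumes f: "C1_on U f Df" and d: "\<And>t. (\<phi> has_real_derivative \<phi>' t) (at t)"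
    and c: "continuous_on UNIV \<phi>'"
  shows "C1_on U (\<lambda>x. \<phi> (f x)) (\<lambda>x. \<phi>' (f x) *\<^sub>R Df x)"
proof -
  have cf: "continuous_on U f" using f by (rule C1_on_cont)
  have "continuous_on U (\<lambda>x. \<phi>' (f x))"
    using continuous_on_compose2[OF c cf] by simp
  moreover have "((\<lambda>x. \<phi> (f x)) has_derivative blinfun_apply (\<phi>' (f x) *\<^sub>R Df x)) (at x)" if "x \<in> U" for x
  proof -
    have "(f has_derivative blinfun_apply (Df x)) (at x)" using f that unfolding C1_on_def by blast
    from has_derivative_compose[OF this d[of "f x", unfolded has_field_derivative_def]]
    show ?thesis by (simp add: scaleR_blinfun.rep_eq mult.commute)
  qed
  ultimately show ?thesis using f unfolding C1_on_def
    by (auto intro!: continuous_on_scaleR)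
qed

lemma C1_on_divide:
  assumes f: "C1_on U f Df" and g: "C1_on U g Dg" and nz: "\<And>x. x \<in> U \<Longrightarrow> g x \<noteq> 0"
  shows "C1_on U (\<lambda>x. f x / g x) (\<lambda>x. (1 / g x) *\<^sub>R Df x - (f x / (g x * g x)) *\<^sub>R Dg x)"
proof -
  have cf: "continuous_on U f" and cg: "continuous_on U g" using C1_on_cont[OF f] C1_on_cont[OF g] by auto
  have "((\<lambda>x. f x / g x) has_derivative blinfun_apply ((1 / g x) *\<^sub>R Df x - (f x / (g x * g x)) *\<^sub>R Dg x)) (at x)"
    if "x \<in> U" for x
    apply (rule has_derivative_eq_rhs)
     apply (rule has_derivative_divide')
    using f g nz that unfolding C1_on_def
    by (auto simp: fun_eq_iff minus_blinfun.rep_eq scaleR_blinfun.rep_eq field_simps)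
  moreover have "continuous_on U (\<lambda>x. (1 / g x) *\<^sub>R Df x - (f x / (g x * g x)) *\<^sub>R Dg x)"
    using f g nz unfolding C1_on_def
    by (auto intro!: continuous_intros cf cg)
  ultimately show ?thesis unfolding C1_on_def by blast
qed

lemma C1_local:
  fixes f :: "'a::real_normed_vector \<Rightarrow> real"
  assumes "\<And>x. \<exists>U g Dg. open U \<and> x \<in> U \<and> (\<forall>z\<in>U. f z = g z) \<and> C1_on U g Dg"
  shows "\<exists>D. C1_with_deriv f D"
proof -
  from assms obtain U g Dg where h: "\<And>x. open (U x) \<and> x \<in> U x \<and> (\<forall>z\<in>U x. f z = g x z) \<and> C1_on (U x) (g x) (Dg x)"
    by metis
  have der: "(f has_derivative blinfun_apply (Dg x z)) (at z)" if "z \<in> U x" for x z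
  proof -
    have "(g x has_derivative blinfun_apply (Dg x z)) (at z)" using h[of x] that unfolding C1_on_def by blast
    then show ?thesis
      by (rule has_derivative_transform_within_open[where s="U x"]) (use h[of x] that in auto)
  qed
  define D where "D x = Dg x x" for x
  have eq: "D z = Dg x z" if "z \<in> U x" for x z
  proof -
    have "blinfun_apply (Dg z z) = blinfun_apply (Dg x z)"
      by (rule has_derivative_unique[OF der der]) (use h[of z] that in auto)
    then show ?thesis unfolding D_def by (simp add: blinfun_apply_inject)
  qed
  have "continuous_on UNIV D"
  proof (rule continuous_at_imp_continuous_on, intro ballI)
    fix x :: 'a
    have "continuous_on (U x) D"
      using h[of x] eq[of _ x] unfolding C1_on_def by (auto intro: continuous_on_cong[THEN iffD1])
    then show "isCont D x" using h[of x] continuous_on_eq_continuous_at by blast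
  qed
  moreover have "(f has_derivative blinfun_apply (D x)) (at x)" for x
    unfolding D_def using der h by blast
  ultimately show ?thesis unfolding C1_with_deriv_def by blast
qed



definition hh :: "real \<Rightarrow> real" where "hh u = (max 0 u)^2"

lemma hh_deriv: "(hh has_real_derivative 2 * max 0 u) (at u)"
proof (cases u "0::real" rule: linorder_cases)
  case less
  have "((\<lambda>x. 0::real) has_real_derivative 0) (at u)" by simp
  then have "(hh has_real_derivative 0) (at u)"
    by (rule has_field_derivative_transform_within_open[where S="{..<0}"])
       (use less in \<open>auto simp: hh_def\<close>)
  then show ?thesis using less by simp
next
  case greater
  have "((\<lambda>x. x^2::real) has_real_derivative 2 * u) (at u)"
    by (auto intro!: derivative_eq_intros)
  then have "(hh has_real_derivative 2 * u) (at u)"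
    by (rule has_field_derivative_transform_within_open[where S="{0<..}"])
       (use greater in \<open>auto simp: hh_def\<close>)
  then show ?thesis using greater by simp
next
  case equal
  have "((\<lambda>y. (hh y - hh 0) / (y - 0)) \<longlongrightarrow> 0) (at 0)"
  proof (rule Lim_transform_eventually)
    have "((\<lambda>y. max 0 y) \<longlongrightarrow> max 0 (0::real)) (at (0::real))" by (intro tendsto_intros)
    then show "((\<lambda>y. max 0 y) \<longlongrightarrow> 0) (at (0::real))" by simp
    have "max 0 y = (hh y - hh 0) / (y - 0)" if "y \<noteq> 0" for y :: real
    proof (cases "y > 0")
      case True then show ?thesis by (simp add: hh_def power2_eq_square)
    next
      case False then show ?thesis using that by (simp add: hh_def max_def)
    qed
    then show "\<forall>\<^sub>F y in at 0. max 0 y = (hh y - hh 0) / (y - 0)"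
      unfolding eventually_at_filter by (simp add: always_eventually)
  qed
  then show ?thesis using equal by (simp add: has_field_derivative_iff)
qed

lemma hh_chain_eq:
  "(f has_real_derivative f') (at x) \<Longrightarrow> E = 2 * max 0 (f x) * f' \<Longrightarrow> ((\<lambda>x. hh (f x)) has_real_derivative E) (at x)"
  using DERIV_chain2[OF hh_deriv, of f f' x] by simp

lemma hh_chain:
  "(f has_real_derivative f') (at x) \<Longrightarrow> ((\<lambda>x. hh (f x)) has_real_derivative 2 * max 0 (f x) * f') (at x)"
  using DERIV_chain2[OF hh_deriv, of f f' x] by simp

definition Th :: "real \<Rightarrow> real \<Rightarrow> real" where
  "Th a t = (1 / (2*a)) * (hh (t - a) - hh (t - 2*a) - hh (-t - a) + hh (-t - 2*a))"
definition Th' :: "real \<Rightarrow> real \<Rightarrow> real" where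
  "Th' a t = (1 / a) * (max 0 (t - a) - max 0 (t - 2*a) + max 0 (-t - a) - max 0 (-t - 2*a))"

lemma Th_deriv: "a > 0 \<Longrightarrow> (Th a has_real_derivative Th' a t) (at t)"
  unfolding Th_def[abs_def] Th'_def
  apply (rule derivative_eq_intros hh_chain_eq refl)+
  apply (simp add: algebra_simps)
  done

lemma Th'_cont: "continuous_on UNIV (Th' a)"
  unfolding Th'_def by (intro continuous_intros)

lemma Th_zero: "a > 0 \<Longrightarrow> \<bar>t\<bar> \<le> a \<Longrightarrow> Th a t = 0"
  unfolding Th_def hh_def by (auto simp: max_def)

lemma Th'_zero: "a > 0 \<Longrightarrow> \<bar>t\<bar> \<le> a \<Longrightarrow> Th' a t = 0"
  unfolding Th'_def by (auto simp: max_def)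

lemma Th'_bound: assumes a: "a > 0" shows "\<bar>Th' a t\<bar> \<le> 1"
proof -
  define P where "P = max 0 (t - a) - max 0 (t - 2*a) + max 0 (-t - a) - max 0 (-t - 2*a)"
  have "0 \<le> P \<and> P \<le> a"
    unfolding P_def using a
    by (cases "t \<le> -2*a"; cases "t \<le> -a"; cases "t \<le> a"; cases "t \<le> 2*a"; simp add: max_def; linarith)
  then have "\<bar>P / a\<bar> \<le> 1" using a by (simp add: divide_le_eq)
  then show ?thesis unfolding Th'_def P_def[symmetric] by simp
qed

lemma Th_lip: assumes a: "a > 0" shows "lipschitz_on 1 UNIV (Th a)"
proof (rule bounded_derivative_imp_lipschitz)
  show "(Th a has_derivative (\<lambda>h. Th' a x * h)) (at x within UNIV)" for x
    using Th_deriv[OF a] unfolding has_field_derivative_def by simp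
  show "onorm (\<lambda>h. Th' a x * h) \<le> 1" for x
  proof (rule onorm_bound)
    fix h :: real
    have "\<bar>Th' a x\<bar> * \<bar>h\<bar> \<le> 1 * \<bar>h\<bar>" by (rule mult_right_mono) (use Th'_bound[OF a] in auto)
    then show "norm (Th' a x * h) \<le> 1 * norm h" by (simp add: abs_mult)
  qed simp
qed auto

lemma Th_big: assumes a: "a > 0" and t: "t \<ge> 2*a" shows "Th a t = t - 3/2*a"
proof -
  have "Th a t = (1/(2*a)) * ((t - a)^2 - (t - 2*a)^2)"
    unfolding Th_def hh_def using a t by (simp add: max_def)
  also have "(t - a)^2 - (t - 2*a)^2 = 2*a*t - 3*a*a" by (simp add: power2_eq_square algebra_simps)
  also have "(1/(2*a)) * (2*a*t - 3*a*a) = t - 3/2*a" using a by (simp add: field_simps)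
  finally show ?thesis .
qed

lemma Th_small: assumes a: "a > 0" and t: "t \<le> -2*a" shows "Th a t = t + 3/2*a"
proof -
  have "Th a t = (1/(2*a)) * ((-t - 2*a)^2 - (-t - a)^2)"
    unfolding Th_def hh_def using a t by (simp add: max_def)
  also have "(-t - 2*a)^2 - (-t - a)^2 = 2*a*t + 3*a*a" by (simp add: power2_eq_square algebra_simps)
  also have "(1/(2*a)) * (2*a*t + 3*a*a) = t + 3/2*a" using a by (simp add: field_simps)
  finally show ?thesis .
qed

lemma Th_close: assumes a: "a > 0" shows "\<bar>Th a t - t\<bar> \<le> 4 * a"
proof (cases "\<bar>t\<bar> \<le> 2*a")
  case True
  have "\<bar>Th a t - Th a 0\<bar> \<le> 1 * \<bar>t - 0\<bar>" using lipschitz_onD[OF Th_lip[OF a], of t 0]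
    by (simp add: dist_real_def)
  then show ?thesis using Th_zero[OF a, of 0] a True by auto
next
  case False
  then consider "t \<ge> 2*a" | "t \<le> -2*a" by linarith
  then show ?thesis
  proof cases
    case 1 then show ?thesis using Th_big[OF a 1] a by simp
  next
    case 2 then show ?thesis using Th_small[OF a 2] a by simp
  qed
qed

definition bt :: "real \<Rightarrow> real" where "bt t = hh ((t - 1/4) * (2 - t))"
definition bt' :: "real \<Rightarrow> real" where "bt' t = 2 * max 0 ((t - 1/4) * (2 - t)) * (9/4 - 2*t)"

lemma bt_deriv: "(bt has_real_derivative bt' t) (at t)"
  unfolding bt_def[abs_def] bt'_def
  apply (rule derivative_eq_intros hh_chain_eq refl)+
  apply (simp add: algebra_simps)
  done

lemma bt'_cont: "continuous_on UNIV bt'"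
  unfolding bt'_def by (intro continuous_intros)

lemma bt_nonneg: "bt t \<ge> 0" unfolding bt_def hh_def by simp

lemma bt_zero: assumes "t \<le> 1/4 \<or> t \<ge> 2" shows "bt t = 0"
proof -
  have "(t - 1/4) * (2 - t) \<le> 0"
    using assms by (auto intro: mult_nonpos_nonneg mult_nonneg_nonpos)
  then show ?thesis unfolding bt_def hh_def by (simp add: max_def)
qed

lemma bt_pos: "1/4 < t \<Longrightarrow> t < 2 \<Longrightarrow> bt t > 0"
  unfolding bt_def hh_def by (auto simp: max_def)



lemma infconv:
  fixes g :: "'a::metric_space \<Rightarrow> real"
  assumes Y: "Y \<noteq> {}" and L: "L \<ge> 0" and bdd: "\<And>x. \<exists>c. \<forall>y\<in>Y. c \<le> g y + L * dist x y"
  shows "lipschitz_on L UNIV (\<lambda>x. INF y\<in>Y. g y + L * dist x y)"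
    and "\<And>x y. y \<in> Y \<Longrightarrow> (INF y\<in>Y. g y + L * dist x y) \<le> g y + L * dist x y"
    and "\<And>x c. (\<And>y. y \<in> Y \<Longrightarrow> c \<le> g y + L * dist x y) \<Longrightarrow> c \<le> (INF y\<in>Y. g y + L * dist x y)"
proof -
  define H where "H x = (INF y\<in>Y. g y + L * dist x y)" for x
  have bb: "bdd_below ((\<lambda>y. g y + L * dist x y) ` Y)" for x
    using bdd[of x] by (auto intro: bdd_belowI2)
  show low: "(INF y\<in>Y. g y + L * dist x y) \<le> g y + L * dist x y" if "y \<in> Y" for x y
    by (rule cINF_lower[OF bb that])
  show gr: "c \<le> (INF y\<in>Y. g y + L * dist x y)" if "\<And>y. y \<in> Y \<Longrightarrow> c \<le> g y + L * dist x y" for x c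
    by (rule cINF_greatest[OF Y that])
  have one: "H x - L * dist x x' \<le> H x'" for x x'
    unfolding H_def
  proof (rule gr)
    fix y assume y: "y \<in> Y"
    have "(INF y\<in>Y. g y + L * dist x y) \<le> g y + L * dist x y" by (rule low[OF y])
    also have "\<dots> \<le> g y + L * dist x' y + L * dist x x'"
      using mult_left_mono[OF dist_triangle[of x y x'] L] by (simp add: algebra_simps dist_commute)
    finally show "(INF y\<in>Y. g y + L * dist x y) - L * dist x x' \<le> g y + L * dist x' y" by simp
  qed
  show "lipschitz_on L UNIV (\<lambda>x. INF y\<in>Y. g y + L * dist x y)"
  proof (rule lipschitz_onI[OF _ L])
    fix x x' :: 'a
    show "dist (INF y\<in>Y. g y + L * dist x y) (INF y\<in>Y. g y + L * dist x' y) \<le> L * dist x x'"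
      using one[of x x'] one[of x' x] unfolding H_def dist_real_def by (simp add: dist_commute abs_le_iff)
  qed
qed

lemma mcshane:
  fixes F :: "'a::metric_space \<Rightarrow> real"
  assumes "lipschitz_on L Y F"
  shows "\<exists>H. lipschitz_on (Lip Y F) UNIV H \<and> (\<forall>y\<in>Y. H y = F y)"
proof (cases "Y = {}")
  case True
  then show ?thesis
    using lipschitz_on_mono[OF lipschitz_on_constant[of UNIV 0] order_refl Lip_nonneg[OF assms]] by auto
next
  case False
  define L' where "L' = Lip Y F"
  have FL: "lipschitz_on L' Y F" unfolding L'_def by (rule Lip_attained[OF assms])
  have L': "L' \<ge> 0" using lipschitz_on_nonneg[OF FL] .
  obtain y0 where y0: "y0 \<in> Y" using False by blast
  have bdd: "\<exists>c. \<forall>y\<in>Y. c \<le> F y + L' * dist x y" for x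
  proof (intro exI ballI)
    fix y assume y: "y \<in> Y"
    have "F y0 - F y \<le> L' * dist y y0" using lipschitz_onD[OF FL y y0] by (simp add: dist_real_def dist_commute)
    moreover have "L' * dist y y0 \<le> L' * dist x y + L' * dist x y0"
      using mult_left_mono[OF dist_triangle[of y y0 x] L'] by (simp add: algebra_simps dist_commute)
    ultimately show "F y0 - L' * dist x y0 \<le> F y + L' * dist x y" by linarith
  qed
  note I = infconv[OF False L' bdd]
  show ?thesis
  proof (intro exI conjI ballI)
    show "lipschitz_on (Lip Y F) UNIV (\<lambda>x. INF y\<in>Y. F y + L' * dist x y)" using I(1) unfolding L'_def .
    fix y assume y: "y \<in> Y"
    have "(INF y'\<in>Y. F y' + L' * dist y y') \<le> F y + L' * dist y y" by (rule I(2)[OF y])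
    moreover have "F y \<le> (INF y'\<in>Y. F y' + L' * dist y y')"
    proof (rule I(3))
      fix y' assume "y' \<in> Y"
      then show "F y \<le> F y' + L' * dist y y'" using lipschitz_onD[OF FL y, of y'] by (simp add: dist_real_def abs_le_iff)
    qed
    ultimately show "(INF y'\<in>Y. F y' + L' * dist y y') = F y" by simp
  qed
qed

lemma Lip_ext_eq:
  assumes "lipschitz_on (Lip Y F) UNIV H" "\<And>y. y \<in> Y \<Longrightarrow> H y = F y"
  shows "Lip UNIV H = Lip Y F"
proof (rule antisym)
  show "Lip UNIV H \<le> Lip Y F" using Lip_le[OF assms(1)] .
  have "Lip Y F = Lip Y H" by (rule Lip_cong) (use assms(2) in auto)
  also have "\<dots> \<le> Lip UNIV H" by (rule Lip_mono[OF assms(1)]) auto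
  finally show "Lip Y F \<le> Lip UNIV H" .
qed

definition good :: "('a::metric_space \<Rightarrow> real) \<Rightarrow> real \<Rightarrow> 'a \<Rightarrow> real \<Rightarrow> bool" where
  "good R \<delta> x \<rho> \<longleftrightarrow> (\<forall>z\<in>ball x \<rho>. \<rho> * \<bar>R z\<bar> \<le> 1 \<and> (\<forall>w\<in>ball x \<rho>. \<bar>R z - R w\<bar> \<le> \<delta>/4))"

definition rad :: "('a::metric_space \<Rightarrow> real) \<Rightarrow> real \<Rightarrow> 'a \<Rightarrow> real" where
  "rad R \<delta> x = Sup {\<rho>. 0 \<le> \<rho> \<and> \<rho> \<le> 1 \<and> good R \<delta> x \<rho>}"

lemma good_0: "good R \<delta> x 0" unfolding good_def by simp

lemma rad_set: "{\<rho>. 0 \<le> \<rho> \<and> \<rho> \<le> 1 \<and> good R \<delta> x \<rho>} \<noteq> {}" "bdd_above {\<rho>. 0 \<le> \<rho> \<and> \<rho> \<le> 1 \<and> good R \<delta> x \<rho>}"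
  subgoal using good_0[of R \<delta> x] zero_le_one by blast
  subgoal by (auto intro!: bdd_aboveI[where M=1])
  done

lemma rad_nonneg: "0 \<le> rad R \<delta> x"
proof -
  have "0 \<in> {\<rho>. 0 \<le> \<rho> \<and> \<rho> \<le> 1 \<and> good R \<delta> x \<rho>}" using good_0 by simp
  then show ?thesis unfolding rad_def by (rule cSup_upper[OF _ rad_set(2)])
qed

lemma rad_le1: "rad R \<delta> x \<le> 1"
proof -
  have "\<And>y. y \<in> {\<rho>. 0 \<le> \<rho> \<and> \<rho> \<le> 1 \<and> good R \<delta> x \<rho>} \<Longrightarrow> y \<le> 1" by simp
  then show ?thesis unfolding rad_def using cSup_least[OF rad_set(1)] by blast
qed

lemma good_mono:
  assumes g: "good R \<delta> x \<rho>" and "0 \<le> \<rho>'" and le: "\<rho>' \<le> \<rho>"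
  shows "good R \<delta> x \<rho>'"
  unfolding good_def
proof (intro ballI conjI)
  have sub: "ball x \<rho>' \<subseteq> ball x \<rho>" using le by auto
  fix z assume z: "z \<in> ball x \<rho>'"
  then have zz: "z \<in> ball x \<rho>" using sub by blast
  have "\<rho>' * \<bar>R z\<bar> \<le> \<rho> * \<bar>R z\<bar>" using le by (simp add: mult_right_mono)
  then show "\<rho>' * \<bar>R z\<bar> \<le> 1" using g zz unfolding good_def by force
  fix w assume "w \<in> ball x \<rho>'"
  then have "w \<in> ball x \<rho>" using sub by blast
  then show "\<bar>R z - R w\<bar> \<le> \<delta> / 4" using g zz unfolding good_def by blast
qed

lemma good_ball: "good R \<delta> y \<rho> \<Longrightarrow> dist x y \<le> \<rho> \<Longrightarrow> good R \<delta> x (\<rho> - dist x y)"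
  unfolding good_def
proof (intro ballI conjI)
  assume g: "\<forall>z\<in>ball y \<rho>. \<rho> * \<bar>R z\<bar> \<le> 1 \<and> (\<forall>w\<in>ball y \<rho>. \<bar>R z - R w\<bar> \<le> \<delta> / 4)" and d: "dist x y \<le> \<rho>"
  have sub: "ball x (\<rho> - dist x y) \<subseteq> ball y \<rho>"
    by (auto simp: mem_ball dist_commute) (metis dist_commute dist_triangle add_less_cancel_left diff_add_cancel order_le_less_trans add.commute)
  fix z assume z: "z \<in> ball x (\<rho> - dist x y)"
  then have zz: "z \<in> ball y \<rho>" using sub by blast
  have "(\<rho> - dist x y) * \<bar>R z\<bar> \<le> \<rho> * \<bar>R z\<bar>" by (simp add: mult_right_mono)
  then show "(\<rho> - dist x y) * \<bar>R z\<bar> \<le> 1" using g zz by force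
  fix w assume "w \<in> ball x (\<rho> - dist x y)"
  then show "\<bar>R z - R w\<bar> \<le> \<delta> / 4" using g zz sub by blast
qed

lemma rad_good: assumes "0 \<le> \<rho>" "\<rho> < rad R \<delta> x" shows "good R \<delta> x \<rho>"
proof -
  obtain \<rho>' where "\<rho>' \<in> {\<rho>. 0 \<le> \<rho> \<and> \<rho> \<le> 1 \<and> good R \<delta> x \<rho>}" "\<rho> < \<rho>'"
    using assms(2) less_cSup_iff[OF rad_set] unfolding rad_def by blast
  then show ?thesis using good_mono[of R \<delta> x \<rho>' \<rho>] assms(1) by simp
qed

lemma rad_pos:
  assumes c: "continuous_on UNIV R" and \<delta>: "\<delta> > 0"
  shows "0 < rad R \<delta> x"
proof -
  have "isCont R x" using c by (simp add: continuous_on_eq_continuous_at)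
  then obtain d where d: "d > 0" and dd: "\<And>x'. dist x' x < d \<Longrightarrow> dist (R x') (R x) < min (\<delta>/8) 1"
    unfolding continuous_at_eps_delta using \<delta> by (metis min_less_iff_conj zero_less_divide_iff zero_less_numeral zero_less_one)
  define \<rho> where "\<rho> = min (min d 1) (1 / (\<bar>R x\<bar> + 1))"
  have \<rho>: "0 < \<rho>" "\<rho> \<le> 1" "\<rho> \<le> d" "\<rho> \<le> 1 / (\<bar>R x\<bar> + 1)" using d by (auto simp: \<rho>_def)
  have g: "good R \<delta> x \<rho>"
    unfolding good_def
  proof (intro ballI conjI)
    fix z assume z: "z \<in> ball x \<rho>"
    then have zd: "dist z x < d" using \<rho> by (auto simp: mem_ball dist_commute)
    then have "\<bar>R z - R x\<bar> < 1" using dd[OF zd] by (simp add: dist_real_def)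
    then have "\<bar>R z\<bar> \<le> \<bar>R x\<bar> + 1" by linarith
    then have "\<rho> * \<bar>R z\<bar> \<le> (1 / (\<bar>R x\<bar> + 1)) * (\<bar>R x\<bar> + 1)"
      using \<rho> by (intro mult_mono) auto
    moreover have "\<bar>R x\<bar> + 1 \<noteq> 0" by (metis abs_ge_zero add_nonneg_pos not_one_le_zero zero_less_one order_less_irrefl)
    ultimately show "\<rho> * \<bar>R z\<bar> \<le> 1" by simp
    fix w assume w: "w \<in> ball x \<rho>"
    then have wd: "dist w x < d" using \<rho> by (auto simp: mem_ball dist_commute)
    have a: "\<bar>R z - R x\<bar> < \<delta>/8" using dd[OF zd] by (simp add: dist_real_def)
    have b: "\<bar>R w - R x\<bar> < \<delta>/8" using dd[OF wd] by (simp add: dist_real_def)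
    have "\<bar>(R z - R x) - (R w - R x)\<bar> \<le> \<bar>R z - R x\<bar> + \<bar>R w - R x\<bar>" by (rule abs_triangle_ineq4)
    then show "\<bar>R z - R w\<bar> \<le> \<delta> / 4" using a b by simp
  qed
  have "\<rho> \<le> rad R \<delta> x" unfolding rad_def by (rule cSup_upper[OF _ rad_set(2)]) (use g \<rho> in auto)
  then show ?thesis using \<rho> by simp
qed

lemma rad_lip1: "rad R \<delta> y - dist x y \<le> rad R \<delta> x"
proof (rule dense_le)
  fix w assume w: "w < rad R \<delta> y - dist x y"
  show "w \<le> rad R \<delta> x"
  proof (cases "w \<le> 0")
    case True then show ?thesis using rad_nonneg[of R \<delta> x] by simp
  next
    case False
    have gy: "good R \<delta> y (w + dist x y)" by (rule rad_good) (use w False in auto)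
    have "good R \<delta> x (w + dist x y - dist x y)" by (rule good_ball[OF gy]) (use False in simp)
    then have "good R \<delta> x w" by simp
    moreover have "w \<le> 1" using w rad_le1[of R \<delta> y] zero_le_dist[of x y] by linarith
    ultimately show ?thesis unfolding rad_def using False
      by (intro cSup_upper[OF _ rad_set(2)]) auto
  qed
qed

lemma rad_lip: "lipschitz_on 1 UNIV (rad R \<delta>)"
proof (rule lipschitz_onI)
  fix x y
  show "dist (rad R \<delta> x) (rad R \<delta> y) \<le> 1 * dist x y"
    using rad_lip1[of R \<delta> x y] rad_lip1[of R \<delta> y x] by (simp add: dist_real_def abs_le_iff dist_commute)
qed simp



lemma C1_on_cmult: "C1_on U f Df \<Longrightarrow> C1_on U (\<lambda>x. c * f x) (\<lambda>x. c *\<^sub>R Df x)"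
  unfolding C1_on_def
  by (auto simp: scaleR_blinfun.rep_eq intro!: has_derivative_mult_right continuous_on_scaleR continuous_on_const)

lemma smooth_approx:
  fixes R :: "'a::real_normed_vector \<Rightarrow> real"
  assumes star: "\<And>(f::'a \<Rightarrow> real) \<epsilon>. lipschitz f \<Longrightarrow> \<epsilon> > 0 \<Longrightarrow> \<exists>K. C1_smooth K \<and> (\<forall>x. \<bar>f x - K x\<bar> < \<epsilon>)"
    and Rc: "continuous_on UNIV R" and \<delta>: "\<delta> > 0"
  shows "\<exists>T. C1_smooth T \<and> (\<forall>x. \<bar>R x - T x\<bar> \<le> \<delta>)"
proof -
  define r where "r = rad R \<delta>"
  have r0: "\<And>x. 0 < r x" using rad_pos[OF Rc \<delta>] by (simp add: r_def)
  have r1: "\<And>x. r x \<le> 1" by (simp add: r_def rad_le1)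
  have rlip: "lipschitz_on 1 UNIV r" by (simp add: r_def rad_lip)
  have rgood: "\<And>x \<rho>. 0 \<le> \<rho> \<Longrightarrow> \<rho> < r x \<Longrightarrow> good R \<delta> x \<rho>" by (simp add: r_def rad_good)
  define p where "p n = (2::real)^n" for n :: nat
  have p0: "p n > 0" for n by (simp add: p_def)
  have "\<exists>S. C1_smooth S \<and> (\<forall>x. \<bar>r x - S x\<bar> < 1 / (16 * p n))" for n
    using star[of r "1 / (16 * p n)"] rlip p0[of n] by (auto simp: lipschitz_def)
  then obtain S where S: "\<And>n. C1_smooth (S n)" "\<And>n x. \<bar>r x - S n x\<bar> < 1/(16 * p n)" by metis
  have Sp: "p n * \<bar>r x - S n x\<bar> < 1/16" for n x
  proof -
    have "p n * \<bar>r x - S n x\<bar> < p n * (1/(16 * p n))" by (rule mult_strict_left_mono[OF S(2) p0])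
    moreover have "p n * (1/(16 * p n)) = 1/16" using p0[of n] by simp
    ultimately show ?thesis by simp
  qed
  obtain DS where DS: "\<And>n. C1_on UNIV (S n) (DS n)"
    using S(1) unfolding C1_smooth_def C1_with_deriv_iff by metis
  define N where "N n = 8 * p n" for n
  define \<rho> where "\<rho> n = 1 / (8 * p n)" for n
  define M where "M n = 2 * N n / \<rho> n" for n
  define Q where "Q n y = max (- N n) (min (N n) (R y))" for n y
  define P where "P n x = (INF y\<in>UNIV. Q n y + M n * dist x y)" for n x
  have \<rho>0: "\<rho> n > 0" for n using p0[of n] by (simp add: \<rho>_def)
  have N0: "N n > 0" for n using p0[of n] by (simp add: N_def)
  have M0: "M n \<ge> 0" for n using N0[of n] \<rho>0[of n] by (simp add: M_def)
  have Mrho: "M n * \<rho> n = 2 * N n" for n using \<rho>0[of n] by (simp add: M_def)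
  have Nrho: "N n * \<rho> n = 1" for n using p0[of n] by (simp add: N_def \<rho>_def)
  have Qb: "- N n \<le> Q n y" for n y by (simp add: Q_def)
  have bddQ: "\<exists>c. \<forall>y\<in>UNIV. c \<le> Q n y + M n * dist x y" for n x
    using Qb M0 by (metis add_increasing2 mult_nonneg_nonneg zero_le_dist)
  note IC = infconv[of UNIV, OF UNIV_not_empty M0 bddQ]
  have Plip: "lipschitz_on (M n) UNIV (P n)" for n unfolding P_def[abs_def] by (rule IC(1))
  have Pclose: "\<bar>P n x - R x\<bar> \<le> \<delta>/4" if g: "good R \<delta> x (\<rho> n)" for n x
  proof -
    have xin: "x \<in> ball x (\<rho> n)" using \<rho>0[of n] by simp
    have "\<rho> n * \<bar>R x\<bar> \<le> 1" using g xin unfolding good_def by blast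
    then have "\<rho> n * \<bar>R x\<bar> \<le> \<rho> n * N n" using Nrho[of n] by (simp add: mult.commute)
    then have RN: "\<bar>R x\<bar> \<le> N n" using \<rho>0[of n] by simp
    then have QR: "Q n x = R x" by (auto simp: Q_def abs_le_iff)
    have up: "P n x \<le> R x"
      using IC(2)[of x n x] QR unfolding P_def by simp
    have lo: "R x - \<delta>/4 \<le> P n x"
      unfolding P_def
    proof (rule IC(3))
      fix y :: 'a
      show "R x - \<delta> / 4 \<le> Q n y + M n * dist x y"
      proof (cases "dist x y < \<rho> n")
        case True
        then have "y \<in> ball x (\<rho> n)" by simp
        then have "\<bar>R y - R x\<bar> \<le> \<delta>/4" using g xin unfolding good_def by blast
        then have a1: "R x - \<delta>/4 \<le> R y" using abs_le_D2 by fastforce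
        have a2: "R x - \<delta>/4 \<le> N n" using RN \<delta> by (simp add: abs_le_iff)
        have "R x - \<delta>/4 \<le> Q n y" unfolding Q_def using a1 a2 by (simp add: le_max_iff_disj)
        moreover have "0 \<le> M n * dist x y" using M0[of n] by simp
        ultimately show ?thesis by linarith
      next
        case False
        then have "M n * \<rho> n \<le> M n * dist x y" using M0[of n] by (simp add: mult_left_mono)
        then have "2 * N n \<le> M n * dist x y" using Mrho[of n] by simp
        then show ?thesis using Qb[of n y] RN \<delta> by (simp add: abs_le_iff)
      qed
    qed
    show ?thesis using up lo \<delta> by (simp add: abs_le_iff)
  qed
  have "\<exists>T. C1_smooth T \<and> (\<forall>x. \<bar>P n x - T x\<bar> < \<delta>/4)" for n
    using star[of "P n" "\<delta>/4"] Plip[of n] \<delta> by (auto simp: lipschitz_def)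
  then obtain T where T: "\<And>n. C1_smooth (T n)" "\<And>n x. \<bar>P n x - T n x\<bar> < \<delta>/4" by metis
  obtain DT where DT: "\<And>n. C1_on UNIV (T n) (DT n)"
    using T(1) unfolding C1_smooth_def C1_with_deriv_iff by metis
  have Tclose: "\<bar>T n x - R x\<bar> < \<delta>/2" if "good R \<delta> x (\<rho> n)" for n x
  proof -
    have "\<bar>(P n x - R x) - (P n x - T n x)\<bar> \<le> \<bar>P n x - R x\<bar> + \<bar>P n x - T n x\<bar>" by (rule abs_triangle_ineq4)
    then show ?thesis using Pclose[OF that] T(2)[of n x] by simp
  qed
  define lam where "lam n x = bt (p n * S n x)" for n x
  have lamC1: "C1_on UNIV (lam n) (\<lambda>x. bt' (p n * S n x) *\<^sub>R (p n *\<^sub>R DS n x))" for n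
    unfolding lam_def[abs_def]
    by (rule C1_on_compose[OF C1_on_cmult[OF DS] bt_deriv bt'_cont])
  have lam0: "lam n x \<ge> 0" for n x by (simp add: lam_def bt_nonneg)
  have lam_good: "good R \<delta> x (\<rho> n)" if "lam n x \<noteq> 0" for n x
  proof -
    have "\<not> p n * S n x \<le> 1/4" using that bt_zero unfolding lam_def by blast
    then have a: "1/4 < p n * S n x" by simp
    have "p n * \<bar>r x - S n x\<bar> < 1/16" by (rule Sp)
    then have "p n * (S n x - r x) < 1/16" using p0[of n]
      by (metis abs_minus_commute abs_ge_self le_less_trans mult_left_mono less_imp_le not_less)
    then have "p n * S n x - p n * r x < 1/16" by (simp add: algebra_simps)
    then have "p n * r x > 3/16" using a by linarith
    then have "p n * \<rho> n < p n * r x" using p0[of n] by (simp add: \<rho>_def)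
    then have "\<rho> n < r x" using p0[of n] by simp
    then show ?thesis using rgood \<rho>0[of n] by (simp add: less_imp_le)
  qed
  have loc: "\<exists>m. \<forall>z\<in>ball x (r x/2). \<forall>n\<ge>m. lam n z = 0" for x
  proof -
    obtain m where m: "33 / (8 * r x) < 2^m" using real_arch_pow[of 2] by fastforce
    show ?thesis
    proof (intro exI ballI allI impI)
      fix z n assume z: "z \<in> ball x (r x/2)" and n: "m \<le> n"
      have "\<bar>r z - r x\<bar> \<le> dist z x" using lipschitz_onD[OF rlip, of z x] by (simp add: dist_real_def)
      moreover have "dist z x < r x / 2" using z by (simp add: dist_commute)
      ultimately have rz: "r x / 2 < r z" by linarith
      have mn: "(2::real)^m \<le> 2^n" using n by (simp add: power_increasing)
      have pn: "33 / (8 * r x) < p n" unfolding p_def using m mn by linarith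
      have "33 < p n * (8 * r x)" using pn r0[of x] by (simp add: pos_divide_less_eq)
      then have "33/16 < p n * (r x / 2)" by (simp add: algebra_simps)
      also have "p n * (r x / 2) < p n * r z" using rz p0[of n] by simp
      finally have A: "33/16 < p n * r z" .
      have "p n * \<bar>r z - S n z\<bar> < 1/16" by (rule Sp)
      then have "p n * (r z - S n z) < 1/16" using p0[of n]
        by (metis abs_ge_self le_less_trans mult_left_mono less_imp_le not_less)
      then have "p n * r z - p n * S n z < 1/16" by (simp add: algebra_simps)
      then have "2 \<le> p n * S n z" using A by linarith
      then show "lam n z = 0" unfolding lam_def by (simp add: bt_zero)
    qed
  qed
  have pos: "\<exists>k. lam k z > 0" for z
  proof -
    obtain n0 where n0: "1 / r z < 2^n0" using real_arch_pow[of 2] by fastforce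
    have ex: "1 < 2 * p n0 * r z"
    proof -
      have "1 < 2^n0 * r z" using n0 r0[of z] by (simp add: divide_less_eq mult.commute)
      then have "1 < p n0 * r z" by (simp add: p_def)
      moreover have "p n0 * r z \<le> 2 * p n0 * r z" using p0[of n0] r0[of z] by simp
      ultimately show ?thesis by linarith
    qed
    define k where "k = (LEAST k. 1 < 2 * p k * r z)"
    have k1: "1 < 2 * p k * r z" unfolding k_def by (rule LeastI[where P="\<lambda>k. 1 < 2 * p k * r z", OF ex])
    have k2: "p k * r z \<le> 1"
    proof (cases k)
      case 0 then show ?thesis using r1[of z] by (simp add: p_def)
    next
      case (Suc j)
      then have "\<not> 1 < 2 * p j * r z" using not_less_Least[of j "\<lambda>k. 1 < 2 * p k * r z"] unfolding k_def[symmetric] by simp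
      then show ?thesis using Suc by (simp add: p_def)
    qed
    have "p k * \<bar>r z - S k z\<bar> < 1/16" by (rule Sp)
    moreover have "\<bar>p k * r z - p k * S k z\<bar> = p k * \<bar>r z - S k z\<bar>" using p0[of k]
      by (simp add: abs_mult right_diff_distrib[symmetric])
    ultimately have "\<bar>p k * r z - p k * S k z\<bar> < 1/16" by simp
    then have "p k * r z - p k * S k z < 1/16 \<and> - (p k * r z - p k * S k z) < 1/16" by (simp only: abs_less_iff)
    then have "1/4 < p k * S k z" "p k * S k z < 2" using k1 k2 by linarith+
    then show ?thesis unfolding lam_def by (intro exI bt_pos)
  qed
  define Num where "Num x = (\<Sum>n. lam n x * T n x)" for x
  define Den where "Den x = (\<Sum>n. lam n x)" for x
  have fin: "Num z = (\<Sum>n<m. lam n z * T n z) \<and> Den z = (\<Sum>n<m. lam n z)"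
    if "\<forall>n\<ge>m. lam n z = 0" for z m
    unfolding Num_def Den_def using that
    by (intro conjI suminf_finite) auto
  have Denpos: "(\<Sum>n<m. lam n z) > 0" if "\<forall>n\<ge>m. lam n z = 0" for z m
  proof -
    obtain k where k: "lam k z > 0" using pos by blast
    then have km: "k < m" using that by (metis less_irrefl not_le)
    have "lam k z \<le> (\<Sum>n<m. lam n z)" by (rule member_le_sum) (use km lam0 in auto)
    then show ?thesis using k by linarith
  qed
  define Tf where "Tf x = Num x / Den x" for x
  have "\<exists>D. C1_with_deriv Tf D"
  proof (rule C1_local)
    fix x
    obtain m where m: "\<forall>z\<in>ball x (r x/2). \<forall>n\<ge>m. lam n z = 0" using loc by blast
    let ?U = "ball x (r x/2)"
    let ?g = "\<lambda>z. (\<Sum>n<m. lam n z * T n z) / (\<Sum>n<m. lam n z)"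
    have h1: "C1_on ?U (\<lambda>z. \<Sum>n<m. lam n z * T n z) (\<lambda>z. \<Sum>n<m. lam n z *\<^sub>R DT n z + T n z *\<^sub>R (bt' (p n * S n z) *\<^sub>R (p n *\<^sub>R DS n z)))"
      by (rule C1_on_sum, simp, rule C1_on_subset[OF C1_on_mult[OF lamC1 DT]], simp)
    have h2: "C1_on ?U (\<lambda>z. \<Sum>n<m. lam n z) (\<lambda>z. \<Sum>n<m. bt' (p n * S n z) *\<^sub>R (p n *\<^sub>R DS n z))"
      by (rule C1_on_sum, simp, rule C1_on_subset[OF lamC1], simp)
    have nz: "(\<Sum>n<m. lam n z) \<noteq> 0" if "z \<in> ?U" for z
    proof -
      have "\<forall>n\<ge>m. lam n z = 0" using m that by blast
      from Denpos[OF this] show ?thesis by simp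
    qed
    obtain Dg where Dg: "C1_on ?U ?g Dg" using C1_on_divide[OF h1 h2 nz] by blast
    have eqU: "\<forall>z\<in>?U. Tf z = ?g z"
    proof
      fix z assume "z \<in> ?U"
      then have "\<forall>n\<ge>m. lam n z = 0" using m by blast
      from fin[OF this] show "Tf z = ?g z" unfolding Tf_def by simp
    qed
    have xU: "x \<in> ?U" using r0[of x] by simp
    show "\<exists>U g Dg. open U \<and> x \<in> U \<and> (\<forall>z\<in>U. Tf z = g z) \<and> C1_on U g Dg"
      apply (rule exI[of _ ?U], rule exI[of _ ?g], rule exI[of _ Dg])
      using Dg eqU xU by simp
  qed
  moreover have "\<bar>R x - Tf x\<bar> \<le> \<delta>" for x
  proof -
    obtain m where m0: "\<forall>z\<in>ball x (r x/2). \<forall>n\<ge>m. lam n z = 0" using loc by blast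
    have "x \<in> ball x (r x/2)" using r0[of x] by simp
    then have m: "\<forall>n\<ge>m. lam n x = 0" using m0 by blast
    define A where "A = (\<Sum>n<m. lam n x * T n x)"
    define B where "B = (\<Sum>n<m. lam n x)"
    have B: "B > 0" using Denpos[OF m] by (simp add: B_def)
    have TfAB: "Tf x = A / B" using fin[OF m] by (simp add: Tf_def A_def B_def)
    have tm: "\<bar>lam n x * (T n x - R x)\<bar> \<le> lam n x * (\<delta>/2)" for n
    proof (cases "lam n x = 0")
      case True then show ?thesis by simp
    next
      case False
      have "\<bar>T n x - R x\<bar> \<le> \<delta>/2" using Tclose[OF lam_good[OF False]] by simp
      then have "lam n x * \<bar>T n x - R x\<bar> \<le> lam n x * (\<delta>/2)" using lam0[of n x] by (rule mult_left_mono)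
      then show ?thesis using lam0[of n x] by (simp add: abs_mult)
    qed
    have "A - B * R x = (\<Sum>n<m. lam n x * (T n x - R x))"
      by (simp add: A_def B_def sum_distrib_right sum_subtractf right_diff_distrib)
    then have "\<bar>A - B * R x\<bar> \<le> (\<Sum>n<m. \<bar>lam n x * (T n x - R x)\<bar>)" by (simp add: sum_abs)
    also have "\<dots> \<le> (\<Sum>n<m. lam n x * (\<delta>/2))" by (rule sum_mono) (rule tm)
    also have "\<dots> = B * (\<delta>/2)" by (simp add: B_def sum_distrib_right)
    finally have "\<bar>A - B * R x\<bar> \<le> B * (\<delta>/2)" .
    then have "\<bar>A - B * R x\<bar> / B \<le> \<delta>/2" using B by (simp add: divide_le_eq mult.commute)
    moreover have "\<bar>A / B - R x\<bar> = \<bar>A - B * R x\<bar> / B"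
    proof -
      have "A / B - R x = (A - B * R x) / B" using B by (simp add: field_simps)
      then show ?thesis using B by (simp add: abs_divide)
    qed
    ultimately have "\<bar>A / B - R x\<bar> \<le> \<delta>/2" by simp
    then show ?thesis using TfAB \<delta> by (simp add: abs_minus_commute)
  qed
  ultimately show ?thesis unfolding C1_smooth_def by blast
qed



lemma main_part:
  fixes F S2 :: "'a::banach \<Rightarrow> real"
  assumes star: "property_star TYPE('a) C0" and YF: "lipschitz_on L Y F" and eps: "\<epsilon> > 0"
    and S2: "C1_on UNIV S2 DS" and FS: "\<forall>x. \<bar>F x - S2 x\<bar> \<le> \<epsilon>/16"
  shows "\<exists>G D (K::'a \<Rightarrow> real). C1_with_deriv G D \<and> (\<forall>x. \<bar>F x - G x\<bar> \<le> \<epsilon>) \<and> Lip Y G \<le> C0 * Lip Y F \<and>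
     (\<forall>y\<in>Y. norm (D y) \<le> C0 * Lip Y F) \<and>
     (lipschitz S2 \<longrightarrow> lipschitz G \<and> Lip UNIV G \<le> 2 * Lip UNIV K + Lip UNIV S2) \<and> Lip UNIV K \<le> C0 * Lip Y F"
proof -
  obtain H where H: "lipschitz_on (Lip Y F) UNIV H" "\<forall>y\<in>Y. H y = F y" using mcshane[OF YF] by blast
  have LH: "Lip UNIV H = Lip Y F" by (rule Lip_ext_eq) (use H in auto)
  have "lipschitz H" using H(1) by (auto simp: lipschitz_def)
  then obtain K where K: "lipschitz K" "C1_smooth K" "\<forall>x. \<bar>H x - K x\<bar> < \<epsilon>/16" "Lip UNIV K \<le> C0 * Lip UNIV H"
    using star eps unfolding property_star_def by (meson zero_less_divide_iff zero_less_numeral)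
  obtain DK where DK: "C1_on UNIV K DK" using K(2) unfolding C1_smooth_def C1_with_deriv_iff by blast
  obtain LK where LK: "lipschitz_on LK UNIV K" using K(1) unfolding lipschitz_def by blast
  have LKa: "lipschitz_on (Lip UNIV K) UNIV K" by (rule Lip_attained[OF LK])
  define a where "a = \<epsilon>/8"
  have a: "a > 0" using eps by (simp add: a_def)
  define G where "G x = K x + Th a (S2 x - K x)" for x
  define D where "D x = DK x + Th' a (S2 x - K x) *\<^sub>R (DS x - DK x)" for x
  have C1G: "C1_with_deriv G D"
    unfolding C1_with_deriv_iff G_def[abs_def] D_def[abs_def]
    by (rule C1_on_add[OF DK C1_on_compose[OF C1_on_diff[OF S2 DK] Th_deriv[OF a] Th'_cont]])
  have err: "\<bar>F x - G x\<bar> \<le> \<epsilon>" for x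
  proof -
    have e1: "\<bar>Th a (S2 x - K x) - (S2 x - K x)\<bar> \<le> 4 * a" by (rule Th_close[OF a])
    have "F x - G x = (F x - S2 x) - (Th a (S2 x - K x) - (S2 x - K x))" by (simp add: G_def)
    then have "\<bar>F x - G x\<bar> \<le> \<bar>F x - S2 x\<bar> + \<bar>Th a (S2 x - K x) - (S2 x - K x)\<bar>"
      by (simp add: abs_triangle_ineq4)
    moreover have "\<bar>F x - S2 x\<bar> \<le> \<epsilon>/16" using FS by blast
    ultimately show ?thesis using e1 eps unfolding a_def by linarith
  qed
  have onY: "\<bar>S2 y - K y\<bar> \<le> a" if "y \<in> Y" for y
  proof -
    have "S2 y - K y = (H y - K y) - (F y - S2 y)" using H(2) that by simp
    then have "\<bar>S2 y - K y\<bar> \<le> \<bar>H y - K y\<bar> + \<bar>F y - S2 y\<bar>" by (simp add: abs_triangle_ineq4)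
    moreover have "\<bar>F y - S2 y\<bar> \<le> \<epsilon>/16" using FS by blast
    moreover have "\<bar>H y - K y\<bar> < \<epsilon>/16" using K(3) by blast
    ultimately show ?thesis unfolding a_def by linarith
  qed
  have GY: "G y = K y" if "y \<in> Y" for y using Th_zero[OF a onY[OF that]] by (simp add: G_def)
  have DY: "D y = DK y" if "y \<in> Y" for y using Th'_zero[OF a onY[OF that]] by (simp add: D_def)
  have KC: "Lip UNIV K \<le> C0 * Lip Y F" using K(4) LH by simp
  have LipYG: "Lip Y G \<le> C0 * Lip Y F"
  proof -
    have "Lip Y G = Lip Y K" by (rule Lip_cong) (simp add: GY)
    also have "\<dots> \<le> Lip UNIV K" by (rule Lip_mono[OF LK]) simp
    finally show ?thesis using KC by simp
  qed
  have normD: "norm (D y) \<le> C0 * Lip Y F" if "y \<in> Y" for y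
  proof -
    have "(K has_derivative blinfun_apply (DK y)) (at y)" using DK unfolding C1_on_def by blast
    from deriv_norm_le_lip[OF LKa this] have "norm (DK y) \<le> Lip UNIV K" .
    then show ?thesis using KC DY[OF that] by simp
  qed
  have lipG: "lipschitz G \<and> Lip UNIV G \<le> 2 * Lip UNIV K + Lip UNIV S2" if LS2: "lipschitz S2"
  proof -
    obtain LS where "lipschitz_on LS UNIV S2" using LS2 unfolding lipschitz_def by blast
    then have LSa: "lipschitz_on (Lip UNIV S2) UNIV S2" by (rule Lip_attained)
    have d: "lipschitz_on (Lip UNIV S2 + Lip UNIV K) UNIV (\<lambda>x. S2 x - K x)"
      by (rule lipschitz_on_diff[OF LSa LKa])
    have t: "lipschitz_on (1 * (Lip UNIV S2 + Lip UNIV K)) UNIV (\<lambda>x. Th a (S2 x - K x))"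
      by (rule lipschitz_on_compose2[OF d lipschitz_on_subset[OF Th_lip[OF a]]]) simp
    have "lipschitz_on (Lip UNIV K + 1 * (Lip UNIV S2 + Lip UNIV K)) UNIV G"
      unfolding G_def[abs_def] by (rule lipschitz_on_add[OF LKa t])
    then show ?thesis using Lip_le unfolding lipschitz_def by fastforce
  qed
  show ?thesis
    apply (rule exI[of _ G], rule exI[of _ D], rule exI[of _ K])
    using C1G err LipYG normD lipG KC by blast
qed



theorem lemma2p3:
  fixes C0 :: real
  assumes "property_star TYPE('a::banach) C0"
  shows "(\<forall>(Y::'a set) (F::'a \<Rightarrow> real) \<epsilon>.
            continuous_on UNIV F \<and> (\<exists>L. lipschitz_on L Y F) \<and> \<epsilon> > 0 \<longrightarrow>
            (\<exists>G D. C1_with_deriv G D \<and>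
               (\<forall>x. \<bar>F x - G x\<bar> \<le> \<epsilon>) \<and>
               Lip Y G \<le> C0 * Lip Y F \<and>
               (\<forall>y\<in>Y. norm (D y) \<le> C0 * Lip Y F)))
       \<and> (\<exists>C1\<ge>C0. \<forall>(Y::'a set) (F::'a \<Rightarrow> real) \<epsilon>.
            lipschitz F \<and> \<epsilon> > 0 \<longrightarrow>
            (\<exists>G D. C1_with_deriv G D \<and>
               (\<forall>x. \<bar>F x - G x\<bar> \<le> \<epsilon>) \<and>
               Lip Y G \<le> C0 * Lip Y F \<and>
               (\<forall>y\<in>Y. norm (D y) \<le> C0 * Lip Y F) \<and>
               lipschitz G \<and> Lip UNIV G \<le> C1 * Lip UNIV F))"
proof (intro conjI allI impI)
  note star = assms
  have star': "\<exists>K. C1_smooth K \<and> (\<forall>x. \<bar>f x - K x\<bar> < e)" if "lipschitz f" "e > 0" for f :: "'a \<Rightarrow> real" and e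
    using star that unfolding property_star_def by blast
  fix Y :: "'a set" and F :: "'a \<Rightarrow> real" and \<epsilon> :: real
  assume h: "continuous_on UNIV F \<and> (\<exists>L. lipschitz_on L Y F) \<and> \<epsilon> > 0"
  then obtain L where YF: "lipschitz_on L Y F" by blast
  have eps: "\<epsilon> > 0" using h by blast
  obtain S2 where S2: "C1_smooth S2" "\<forall>x. \<bar>F x - S2 x\<bar> \<le> \<epsilon>/16"
    using smooth_approx[of F "\<epsilon>/16"] star' h by force
  obtain DS where DS: "C1_on UNIV S2 DS" using S2(1) unfolding C1_smooth_def C1_with_deriv_iff by blast
  from main_part[OF star YF eps DS S2(2)]
  show "\<exists>G D. C1_with_deriv G D \<and> (\<forall>x. \<bar>F x - G x\<bar> \<le> \<epsilon>) \<and> Lip Y G \<le> C0 * Lip Y F \<and>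
     (\<forall>y\<in>Y. norm (D y) \<le> C0 * Lip Y F)" by blast
next
  note star = assms
  show "\<exists>C1\<ge>C0. \<forall>(Y::'a set) (F::'a \<Rightarrow> real) \<epsilon>.
            lipschitz F \<and> \<epsilon> > 0 \<longrightarrow>
            (\<exists>G D. C1_with_deriv G D \<and>
               (\<forall>x. \<bar>F x - G x\<bar> \<le> \<epsilon>) \<and>
               Lip Y G \<le> C0 * Lip Y F \<and>
               (\<forall>y\<in>Y. norm (D y) \<le> C0 * Lip Y F) \<and>
               lipschitz G \<and> Lip UNIV G \<le> C1 * Lip UNIV F)"
  proof (intro exI[of _ "3 * \<bar>C0\<bar>"] conjI allI impI)
    show "C0 \<le> 3 * \<bar>C0\<bar>" by simp
    fix Y :: "'a set" and F :: "'a \<Rightarrow> real" and \<epsilon> :: real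
    assume h: "lipschitz F \<and> \<epsilon> > 0"
    then have eps: "\<epsilon> > 0" and lF: "lipschitz F" by auto
    then obtain L where LF: "lipschitz_on L UNIV F" unfolding lipschitz_def by blast
    have YF: "lipschitz_on L Y F" using lipschitz_on_subset[OF LF] by blast
    obtain K2 where K2: "lipschitz K2" "C1_smooth K2" "\<forall>x. \<bar>F x - K2 x\<bar> < \<epsilon>/16" "Lip UNIV K2 \<le> C0 * Lip UNIV F"
      using star lF eps unfolding property_star_def by (meson zero_less_divide_iff zero_less_numeral)
    obtain DS where DS: "C1_on UNIV K2 DS" using K2(2) unfolding C1_smooth_def C1_with_deriv_iff by blast
    have FS: "\<forall>x. \<bar>F x - K2 x\<bar> \<le> \<epsilon>/16" using K2(3) by (simp add: less_imp_le)
    obtain G D and K :: "'a \<Rightarrow> real" where GD: "C1_with_deriv G D" "\<forall>x. \<bar>F x - G x\<bar> \<le> \<epsilon>" "Lip Y G \<le> C0 * Lip Y F"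
      "\<forall>y\<in>Y. norm (D y) \<le> C0 * Lip Y F"
      "lipschitz K2 \<longrightarrow> lipschitz G \<and> Lip UNIV G \<le> 2 * Lip UNIV K + Lip UNIV K2"
      "Lip UNIV K \<le> C0 * Lip Y F"
      using main_part[OF star YF eps DS FS] by blast
    have lG: "lipschitz G" "Lip UNIV G \<le> 2 * Lip UNIV K + Lip UNIV K2" using GD(5) K2(1) by auto
    have LYF0: "0 \<le> Lip Y F" by (rule Lip_nonneg[OF YF])
    have LF0: "0 \<le> Lip UNIV F" by (rule Lip_nonneg[OF LF])
    have LYF: "Lip Y F \<le> Lip UNIV F" by (rule Lip_mono[OF LF]) simp
    have a1: "C0 * Lip Y F \<le> \<bar>C0\<bar> * Lip UNIV F"
    proof -
      have "C0 * Lip Y F \<le> \<bar>C0\<bar> * Lip Y F" using LYF0 by (simp add: mult_right_mono)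
      also have "\<dots> \<le> \<bar>C0\<bar> * Lip UNIV F" using LYF by (simp add: mult_left_mono)
      finally show ?thesis .
    qed
    have a2: "C0 * Lip UNIV F \<le> \<bar>C0\<bar> * Lip UNIV F" using LF0 by (simp add: mult_right_mono)
    have "Lip UNIV G \<le> 3 * \<bar>C0\<bar> * Lip UNIV F" using lG(2) GD(6) K2(4) a1 a2 by linarith
    then show "\<exists>G D. C1_with_deriv G D \<and> (\<forall>x. \<bar>F x - G x\<bar> \<le> \<epsilon>) \<and> Lip Y G \<le> C0 * Lip Y F \<and>
       (\<forall>y\<in>Y. norm (D y) \<le> C0 * Lip Y F) \<and> lipschitz G \<and> Lip UNIV G \<le> 3 * \<bar>C0\<bar> * Lip UNIV F"
      using GD lG by blast
  qed
qed


end
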